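(* Let $n\ge 2$, let $S$ be a linear subspace of $\mathbb R^n$ of dimension $D$, and let $\xi=(\xi_1,\dots,\xi_n)$ be a random vector with independent coordinates. Let $\sigma>0$ and $c>0$, and assume that for every $i=1,\dots,n$, $$\log\mathbb E\big[e^{\lambda\xi_i}\big]\le\frac{\lambda^2\sigma^2}{2(1-|\lambda|c)}\qquad\text{for all }\lambda\in(-1/c,1/c).$$ Then, with $\kappa=18$, for all $x,u>0$, $$\mathbb P\Big[|\Pi_S\xi|_2^2\ge\kappa^2\Big(\sigma^2+\frac{2cu}{\kappa}\Big)(D+x),\ \ |\Pi_S\xi|_\infty\le u\Big]\le e^{-x}.$$ Moreover, for all $x>0$, $$\mathbb P\big(|\Pi_S\xi|_\infty\ge x\big)\le 2n\exp\Big[-\frac{x^2}{2\Lambda_2^2(S)(\sigma^2+cx)}\Big].$$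
   Context: $\Pi_S$ is the orthogonal projection of $\mathbb R^n$ onto $S$ for the Euclidean inner product $\langle\cdot,\cdot\rangle$. For $x\in\mathbb R^n$, $|x|_2=\sqrt{\langle x,x\rangle}$ and $|x|_\infty=\max_i|x_i|$. Let $e_1,\dots,e_n$ be the canonical basis of $\mathbb R^n$. Then $\Lambda_2(S)=\max_{i=1,\dots,n}|\Pi_Se_i|_2$. *)

theory Defs
  imports "HOL-Probability.Probability"
begin

definition orth_proj :: "(real^'n) set \<Rightarrow> real^'n \<Rightarrow> real^'n" where
  "orth_proj S x = (THE p. p \<in> S \<and> (\<forall>y\<in>S. inner (x - p) y = 0))"

definition linf_norm :: "real^'n \<Rightarrow> real" where
  "linf_norm x = Max (range (\<lambda>i. \<bar>x $ i\<bar>))"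

definition Lambda2 :: "(real^'n) set \<Rightarrow> real" where
  "Lambda2 S = Max (range (\<lambda>i. norm (orth_proj S (axis i 1))))"

end

theory Submission
  imports Defs
begin


lemma packing_coord:
  fixes P BI :: "'a::euclidean_space set"
  assumes BI: "BI \<subseteq> Basis" and fin: "finite P"
    and zero: "\<And>y j. y \<in> P \<Longrightarrow> j \<in> Basis \<Longrightarrow> j \<notin> BI \<Longrightarrow> y \<bullet> j = 0"
    and nrm: "\<And>y. y \<in> P \<Longrightarrow> norm y \<le> 1"
    and sep: "\<And>y y'. y \<in> P \<Longrightarrow> y' \<in> P \<Longrightarrow> y \<noteq> y' \<Longrightarrow> 1/2 \<le> dist y y'"
  shows "real (card P) \<le> 5 ^ card BI"
proof -
  have finBI: "finite BI" using BI finite_Basis finite_subset by blast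
  define pr where "pr z = (\<Sum>j\<in>BI. (z \<bullet> j) *\<^sub>R j)" for z :: 'a
  define A0 where "A0 = {z. norm (pr z) < 1/4 \<and> (\<forall>j\<in>Basis-BI. \<bar>z\<bullet>j\<bar> < 1)}"
  define A where "A = {z. norm (pr z) < 5/4 \<and> (\<forall>j\<in>Basis-BI. \<bar>z\<bullet>j\<bar> < 1)}"
  define c where "c j = (if j \<in> BI then 5 else 1::real)" for j :: 'a
  define T where "T = (\<lambda>x. 0 + (\<Sum>j\<in>Basis. (c j * (x \<bullet> j)) *\<^sub>R j))"
  have c0: "\<And>j. j \<in> Basis \<Longrightarrow> c j \<noteq> 0" by (simp add: c_def)
  have prj: "pr z \<bullet> j = z \<bullet> j" if "j \<in> BI" for z j
  proof -
    have "pr z \<bullet> j = (\<Sum>i\<in>BI. (z \<bullet> i) * (i \<bullet> j))" by (simp add: pr_def inner_sum_left)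
    also have "\<dots> = (\<Sum>i\<in>BI. if i = j then z \<bullet> j else 0)"
    proof (intro sum.cong refl)
      fix i assume "i \<in> BI"
      with BI that have "i \<in> Basis" "j \<in> Basis" by auto
      then show "(z \<bullet> i) * (i \<bullet> j) = (if i = j then z \<bullet> j else 0)" by (auto simp: inner_Basis)
    qed
    also have "\<dots> = z \<bullet> j" using finBI that by simp
    finally show ?thesis .
  qed
  have Tj: "T x \<bullet> j = c j * (x \<bullet> j)" if "j \<in> Basis" for x j
  proof -
    have "T x \<bullet> j = (\<Sum>i\<in>Basis. (c i * (x \<bullet> i)) * (i \<bullet> j))" by (simp add: T_def inner_sum_left)
    also have "\<dots> = (\<Sum>i\<in>Basis. if i = j then c j * (x \<bullet> j) else 0)"
      using that by (intro sum.cong) (auto simp: inner_Basis)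
    also have "\<dots> = c j * (x \<bullet> j)" using that by simp
    finally show ?thesis .
  qed
  have prT: "pr (T x) = 5 *\<^sub>R pr x" for x
    unfolding pr_def scaleR_sum_right
    using BI by (intro sum.cong) (auto simp: Tj c_def)
  have TA: "T -` A = A0"
    using Tj by (auto simp: A_def A0_def prT c_def)
  have prnorm: "norm (pr z) \<le> real (card BI) * norm z" for z
  proof -
    have "norm (pr z) \<le> (\<Sum>j\<in>BI. norm ((z \<bullet> j) *\<^sub>R j))" unfolding pr_def by (rule norm_sum)
    also have "\<dots> \<le> (\<Sum>j\<in>BI. norm z)"
      using BI by (intro sum_mono) (auto simp: Basis_le_norm)
    finally show ?thesis by simp
  qed
  have Aborel: "A \<in> sets borel" unfolding A_def pr_def by measurable
  have A0borel: "A0 \<in> sets borel" unfolding A0_def pr_def by measurable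
  have Abdd: "bounded A"
  proof -
    { fix z assume z: "z \<in> A"
      have "norm z \<le> (\<Sum>b\<in>Basis. \<bar>z \<bullet> b\<bar>)" by (rule norm_le_l1)
      also have "\<dots> \<le> (\<Sum>b\<in>(Basis::'a set). 5/4)"
      proof (rule sum_mono)
        fix b :: 'a assume b: "b \<in> Basis"
        show "\<bar>z \<bullet> b\<bar> \<le> 5/4"
        proof (cases "b \<in> BI")
          case True
          then have "\<bar>z \<bullet> b\<bar> = \<bar>pr z \<bullet> b\<bar>" by (simp add: prj)
          also have "\<dots> \<le> norm (pr z)" using b by (rule Basis_le_norm)
          finally show ?thesis using z by (simp add: A_def)
        next
          case False then show ?thesis using z b by (force simp: A_def)
        qed
      qed
      finally have "norm z \<le> real DIM('a) * (5/4)" by simp }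
    then show ?thesis unfolding bounded_iff by blast
  qed
  have A0A: "A0 \<subseteq> A" by (auto simp: A0_def A_def)
  have A0bdd: "bounded A0" using Abdd A0A bounded_subset by blast
  have Alm: "A \<in> lmeasurable" using Abdd Aborel by (intro bounded_set_imp_lmeasurable) auto
  have A0lm: "A0 \<in> lmeasurable" using A0bdd A0borel by (intro bounded_set_imp_lmeasurable) auto
  have prodc: "(\<Prod>j\<in>Basis. \<bar>c j\<bar>) = 5 ^ card BI"
  proof -
    have "(\<Prod>j\<in>Basis. \<bar>c j\<bar>) = (\<Prod>j\<in>Basis. if j \<in> BI then 5 else 1)"
      by (intro prod.cong) (auto simp: c_def)
    also have "\<dots> = prod (\<lambda>_. 5) (Basis \<inter> BI)"
      by (simp add: prod.inter_restrict[symmetric])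
    also have "Basis \<inter> BI = BI" using BI by auto
    finally show ?thesis by simp
  qed
  have Tmeas: "T \<in> lebesgue \<rightarrow>\<^sub>M lebesgue"
    unfolding T_def by (rule lebesgue_affine_measurable) (rule c0)
  have "emeasure lebesgue A = emeasure (density (distr lebesgue lebesgue T) (\<lambda>_. (\<Prod>j\<in>Basis. \<bar>c j\<bar>))) A"
    unfolding T_def by (subst lebesgue_affine_euclidean[OF c0, symmetric]) auto
  also have "\<dots> = ennreal (\<Prod>j\<in>Basis. \<bar>c j\<bar>) * emeasure (distr lebesgue lebesgue T) A"
    using Aborel by (simp add: emeasure_density nn_integral_cmult_indicator)
  also have "\<dots> = ennreal (5 ^ card BI) * emeasure lebesgue A0"
    using Aborel Tmeas by (simp add: emeasure_distr TA prodc)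
  finally have measA: "measure lebesgue A = 5 ^ card BI * measure lebesgue A0"
    by (simp add: measure_def enn2real_mult)
  define F where "F y = (+) y ` A0" for y
  have prlin: "pr (a + b) = pr a + pr b" for a b
    by (simp add: pr_def inner_add_left scaleR_add_left sum.distrib)
  have pry: "pr y = y" if "y \<in> P" for y
  proof -
    have "pr y = (\<Sum>j\<in>Basis. (y \<bullet> j) *\<^sub>R j)"
      unfolding pr_def using BI zero[OF that] by (intro sum.mono_neutral_left) auto
    then show ?thesis by (simp add: euclidean_representation)
  qed
  have FA: "F y \<subseteq> A" if "y \<in> P" for y
  proof
    fix z assume "z \<in> F y"
    then obtain a where a: "a \<in> A0" "z = y + a" by (auto simp: F_def)
    have "norm (pr z) \<le> norm y + norm (pr a)" using a that by (simp add: prlin pry norm_triangle_ineq)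
    also have "\<dots> < 5/4" using nrm[OF that] a by (simp add: A0_def)
    finally show "z \<in> A" using a zero[OF that] by (auto simp: A_def A0_def inner_add_left)
  qed
  have disj: "disjoint_family_on F P"
    unfolding disjoint_family_on_def
  proof (intro ballI impI)
    fix y y' assume y: "y \<in> P" "y' \<in> P" "y \<noteq> y'"
    show "F y \<inter> F y' = {}"
    proof (rule ccontr)
      assume "F y \<inter> F y' \<noteq> {}"
      then obtain a a' where a: "a \<in> A0" "a' \<in> A0" "y + a = y' + a'" by (auto simp: F_def)
      then have "pr (y + a) = pr (y' + a')" by simp
      then have "y - y' = pr a' - pr a" using y by (simp add: prlin pry algebra_simps)
      then have "dist y y' = norm (pr a' - pr a)" by (simp add: dist_norm)
      also have "\<dots> \<le> norm (pr a') + norm (pr a)" by (rule norm_triangle_ineq4)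
      also have "\<dots> < 1/2" using a by (simp add: A0_def)
      finally show False using sep[OF y] by simp
    qed
  qed
  have Flm: "F y \<in> lmeasurable" for y unfolding F_def by (rule measurable_translation[OF A0lm])
  have Flm': "emeasure lebesgue (F y) \<noteq> \<infinity>" for y using Flm[of y] by (auto simp: fmeasurable_def simp del: emeasure_completion)
  have "measure lebesgue (\<Union>y\<in>P. F y) = (\<Sum>y\<in>P. measure lebesgue (F y))"
    using fin disj Flm Flm' by (intro measure_finite_Union) (auto simp: fmeasurable_def simp del: emeasure_completion)
  also have "\<dots> = real (card P) * measure lebesgue A0" by (simp add: F_def measure_translation)
  finally have eqU: "measure lebesgue (\<Union>y\<in>P. F y) = real (card P) * measure lebesgue A0" .
  have "measure lebesgue (\<Union>y\<in>P. F y) \<le> measure lebesgue A"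
    using FA Flm fin Alm by (intro measure_mono_fmeasurable) (auto simp: fmeasurable_def)
  then have le: "real (card P) * measure lebesgue A0 \<le> 5 ^ card BI * measure lebesgue A0"
    using eqU measA by simp
  define r where "r = 1 / (4 * (real (card BI) + 1))"
  have r0: "r > 0" by (simp add: r_def)
  have ballA0: "ball 0 r \<subseteq> A0"
  proof
    fix z :: 'a assume "z \<in> ball 0 r"
    then have nz: "norm z < r" by simp
    have r1: "r \<le> 1/4" by (simp add: r_def field_simps)
    have "norm (pr z) \<le> real (card BI) * norm z" by (rule prnorm)
    also have "\<dots> \<le> real (card BI) * r" using nz by (intro mult_left_mono) auto
    also have "\<dots> < 1/4" by (simp add: r_def field_simps)
    finally have "norm (pr z) < 1/4" .
    moreover have "\<bar>z \<bullet> j\<bar> < 1" if "j \<in> Basis" for j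
      using Basis_le_norm[OF that, of z] nz r1 by linarith
    ultimately show "z \<in> A0" by (auto simp: A0_def)
  qed
  have "0 < measure lborel (ball (0::'a) r)" using r0 by (rule content_ball_pos)
  also have "measure lborel (ball (0::'a) r) = measure lebesgue (ball (0::'a) r)" by simp
  also have "\<dots> \<le> measure lebesgue A0"
    using ballA0 A0lm by (intro measure_mono_fmeasurable) auto
  finally have "measure lebesgue A0 > 0" .
  with le show ?thesis by simp
qed


lemma norm_orthonormal_sum:
  fixes f :: "'b \<Rightarrow> 'a::real_inner"
  assumes "finite B" "\<And>b. b \<in> B \<Longrightarrow> norm (f b) = 1"
    "\<And>b b'. b \<in> B \<Longrightarrow> b' \<in> B \<Longrightarrow> b \<noteq> b' \<Longrightarrow> f b \<bullet> f b' = 0"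
  shows "(norm (\<Sum>b\<in>B. a b *\<^sub>R f b))^2 = (\<Sum>b\<in>B. (a b)^2)"
proof -
  have "(norm (\<Sum>b\<in>B. a b *\<^sub>R f b))^2 = (\<Sum>b\<in>B. a b *\<^sub>R f b) \<bullet> (\<Sum>b\<in>B. a b *\<^sub>R f b)"
    by (simp add: power2_norm_eq_inner)
  also have "\<dots> = (\<Sum>b\<in>B. \<Sum>b'\<in>B. (a b *\<^sub>R f b) \<bullet> (a b' *\<^sub>R f b'))"
    unfolding inner_sum_left by (simp only: inner_sum_right)
  also have "\<dots> = (\<Sum>b\<in>B. \<Sum>b'\<in>B. if b' = b then (a b)^2 else 0)"
  proof (intro sum.cong refl)
    fix b b' assume "b \<in> B" "b' \<in> B"
    then show "(a b *\<^sub>R f b) \<bullet> (a b' *\<^sub>R f b') = (if b' = b then (a b)^2 else 0)"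
    proof -
      have "f b \<bullet> f b = 1" using assms(2)[OF \<open>b \<in> B\<close>] by (metis power2_norm_eq_inner one_power2)
      then show ?thesis using assms(3)[of b b'] \<open>b \<in> B\<close> \<open>b' \<in> B\<close>
        by (auto simp: power2_eq_square)
    qed
  qed
  also have "\<dots> = (\<Sum>b\<in>B. (a b)^2)" using assms(1) by simp
  finally show ?thesis .
qed

lemma net_card:
  fixes S P :: "'a::euclidean_space set"
  assumes S: "subspace S" and PS: "P \<subseteq> S" and fin: "finite P"
    and nrm: "\<And>y. y \<in> P \<Longrightarrow> norm y \<le> 1"
    and sep: "\<And>y y'. y \<in> P \<Longrightarrow> y' \<in> P \<Longrightarrow> y \<noteq> y' \<Longrightarrow> 1/2 \<le> dist y y'"
  shows "real (card P) \<le> 5 ^ dim S"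
proof -
  obtain B where B: "B \<subseteq> S" "pairwise orthogonal B" "\<And>x. x \<in> B \<Longrightarrow> norm x = 1"
    "independent B" "card B = dim S" "span B = S"
    using orthonormal_basis_subspace[OF S] by blast
  have finB: "finite B" using B(4) finiteI_independent by blast
  have "card B \<le> card (Basis::'a set)" using B(5) dim_subset_UNIV by metis
  then obtain \<phi> :: "'a \<Rightarrow> 'a" where phi: "\<phi> ` B \<subseteq> Basis" "inj_on \<phi> B"
    using card_le_inj[OF finB finite_Basis] by auto
  define Q where "Q x = (\<Sum>b\<in>B. (b \<bullet> x) *\<^sub>R \<phi> b)" for x
  have Bo: "b \<bullet> b' = 0" if "b \<in> B" "b' \<in> B" "b \<noteq> b'" for b b'
    using B(2) that by (auto simp: pairwise_def orthogonal_def)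
  have rep: "x = (\<Sum>b\<in>B. (b \<bullet> x) *\<^sub>R b)" if "x \<in> S" for x
  proof -
    define z where "z = x - (\<Sum>b\<in>B. (b \<bullet> x) *\<^sub>R b)"
    have zS: "z \<in> S" unfolding z_def
      using that B(1) S by (intro subspace_diff subspace_sum subspace_scale) auto
    have zo: "orthogonal z b'" if "b' \<in> B" for b'
    proof -
      have "(\<Sum>b\<in>B. (b \<bullet> x) *\<^sub>R b) \<bullet> b' = (\<Sum>b\<in>B. if b = b' then b' \<bullet> x else 0)"
        unfolding inner_sum_left
      proof (intro sum.cong refl)
        fix b assume "b \<in> B" then show "((b \<bullet> x) *\<^sub>R b) \<bullet> b' = (if b = b' then b' \<bullet> x else 0)"
          using Bo[of b b'] B(3)[of b'] that by (auto simp: dot_square_norm)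
      qed
      also have "\<dots> = b' \<bullet> x" using finB that by simp
      finally show ?thesis by (simp add: z_def orthogonal_def inner_diff_left inner_diff_right inner_commute)
    qed
    have zB: "z \<in> span B" using zS B(6) by simp
    have "orthogonal z z" by (rule orthogonal_to_span[OF zB zo])
    then have "z = 0" by (simp add: orthogonal_def)
    then show ?thesis by (simp add: z_def)
  qed
  have normQ: "norm (Q x) = norm x" if "x \<in> S" for x
  proof -
    have "(norm (Q x))^2 = (\<Sum>b\<in>B. (b \<bullet> x)^2)"
      unfolding Q_def
    proof (rule norm_orthonormal_sum[OF finB])
      fix b assume "b \<in> B" then show "norm (\<phi> b) = 1" using phi by auto
    next
      fix b b' assume "b \<in> B" "b' \<in> B" "b \<noteq> b'"
      then have "\<phi> b \<in> Basis" "\<phi> b' \<in> Basis" "\<phi> b \<noteq> \<phi> b'" using phi by (auto simp: inj_on_def)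
      then show "\<phi> b \<bullet> \<phi> b' = 0" by (simp add: inner_Basis)
    qed
    also have "\<dots> = (norm (\<Sum>b\<in>B. (b \<bullet> x) *\<^sub>R b))^2"
      by (rule norm_orthonormal_sum[OF finB, symmetric]) (use B(3) Bo in auto)
    also have "\<dots> = (norm x)^2" using rep[OF that] by simp
    finally show ?thesis by (simp add: power2_eq_iff_nonneg)
  qed
  have Qdiff: "Q x - Q y = Q (x - y)" for x y
    by (simp add: Q_def inner_diff_right scaleR_diff_left sum_subtractf)
  have dQ: "dist (Q x) (Q y) = dist x y" if "x \<in> S" "y \<in> S" for x y
    using normQ[of "x - y"] that S by (simp add: dist_norm Qdiff subspace_diff)
  have injQ: "inj_on Q P"
    using dQ PS by (auto simp: inj_on_def) (metis dist_eq_0_iff subsetD)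
  have "real (card (Q ` P)) \<le> 5 ^ card (\<phi> ` B)"
  proof (rule packing_coord)
    show "\<phi> ` B \<subseteq> Basis" by (rule phi(1))
    show "finite (Q ` P)" using fin by simp
  next
    fix y j assume y: "y \<in> Q ` P" and j: "j \<in> Basis" "j \<notin> \<phi> ` B"
    then obtain x where "y = Q x" by auto
    have "Q x \<bullet> j = (\<Sum>b\<in>B. (b \<bullet> x) * (\<phi> b \<bullet> j))" by (simp add: Q_def inner_sum_left)
    also have "\<dots> = 0"
    proof (intro sum.neutral ballI)
      fix b assume "b \<in> B"
      then have "\<phi> b \<in> Basis" "\<phi> b \<noteq> j" using phi j by auto
      then show "(b \<bullet> x) * (\<phi> b \<bullet> j) = 0" using j by (simp add: inner_Basis)
    qed
    finally show "y \<bullet> j = 0" using \<open>y = Q x\<close> by simp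
  next
    fix y assume "y \<in> Q ` P" then show "norm y \<le> 1" using normQ nrm PS by auto
  next
    fix y y' assume "y \<in> Q ` P" "y' \<in> Q ` P" "y \<noteq> y'"
    then obtain x x' where xx: "x \<in> P" "x' \<in> P" "y = Q x" "y' = Q x'" "Q x \<noteq> Q x'" by auto
    then have "x \<noteq> x'" by auto
    then have "1/2 \<le> dist x x'" using sep xx by auto
    moreover have "dist (Q x) (Q x') = dist x x'" using dQ PS xx by auto
    ultimately show "1/2 \<le> dist y y'" using xx by simp
  qed
  moreover have "card (Q ` P) = card P" using injQ by (rule card_image)
  moreover have "card (\<phi> ` B) = dim S" using phi(2) B(5) by (simp add: card_image)
  ultimately show ?thesis by simp
qed

lemma net_exists:
  fixes S T :: "'a::euclidean_space set"
  assumes S: "subspace S" and TS: "T \<subseteq> S" and nrm: "\<And>y. y \<in> T \<Longrightarrow> norm y \<le> 1"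
  obtains N where "finite N" "N \<subseteq> T" "real (card N) \<le> 5 ^ dim S"
    "\<And>v. v \<in> T \<Longrightarrow> \<exists>v'\<in>N. dist v v' < 1/2"
proof -
  define G where "G N \<longleftrightarrow> finite N \<and> N \<subseteq> T \<and> (\<forall>y\<in>N. \<forall>y'\<in>N. y \<noteq> y' \<longrightarrow> 1/2 \<le> dist y y')" for N
  have bnd: "G N \<Longrightarrow> real (card N) \<le> 5 ^ dim S" for N
    unfolding G_def using TS nrm by (intro net_card[OF S]) auto
  have "\<forall>N. G N \<longrightarrow> card N < 5 ^ dim S + 1"
  proof (intro allI impI)
    fix N assume "G N"
    from bnd[OF this] have "real (card N) \<le> real (5 ^ dim S)" by simp
    then show "card N < 5 ^ dim S + 1" by linarith
  qed
  moreover have "G {}" by (simp add: G_def)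
  ultimately obtain N where N: "G N" "\<And>N'. G N' \<Longrightarrow> card N' \<le> card N"
    using ex_has_greatest_nat[of G "{}" card] by blast
  show ?thesis
  proof (rule that)
    show "finite N" "N \<subseteq> T" using N(1) by (auto simp: G_def)
    show "real (card N) \<le> 5 ^ dim S" using bnd[OF N(1)] .
  next
    fix v assume v: "v \<in> T"
    show "\<exists>v'\<in>N. dist v v' < 1/2"
    proof (rule ccontr)
      assume "\<not> ?thesis"
      then have far: "\<forall>v'\<in>N. 1/2 \<le> dist v v'" by auto
      then have vN: "v \<notin> N" by fastforce
      have "G (insert v N)"
        using N(1) v far unfolding G_def by (auto simp: dist_commute)
      then have "card (insert v N) \<le> card N" by (rule N(2))
      moreover have "card (insert v N) = card N + 1" using vN N(1) by (simp add: G_def)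
      ultimately show False by simp
    qed
  qed
qed


lemma bernstein_vec:
  fixes M :: "'a measure" and \<xi> :: "'a \<Rightarrow> real^'n" and v :: "real^'n"
    and \<sigma> c V b t :: real
  assumes P: "prob_space M"
    and ind: "prob_space.indep_vars M (\<lambda>_. borel) (\<lambda>i \<omega>. \<xi> \<omega> $ i) UNIV"
    and c: "c > 0" and sig: "\<sigma> > 0"
    and mgf: "\<And>i l. \<bar>l\<bar> < 1 / c \<Longrightarrow>
           integrable M (\<lambda>\<omega>. exp (l * \<xi> \<omega> $ i)) \<and>
           ln (prob_space.expectation M (\<lambda>\<omega>. exp (l * \<xi> \<omega> $ i)))
             \<le> l^2 * \<sigma>^2 / (2 * (1 - \<bar>l\<bar> * c))"
    and V: "(\<Sum>j\<in>UNIV. (v$j)^2) \<le> V" "V > 0"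
    and b: "\<And>j. \<bar>v$j\<bar> \<le> b" "b > 0" and t: "t > 0"
  shows "measure M {\<omega> \<in> space M. t \<le> v \<bullet> \<xi> \<omega>} \<le> exp (- (t^2 / (2 * (V * \<sigma>^2 + b * c * t))))"
proof -
  interpret prob_space M by (rule P)
  define Q where "Q = V * \<sigma>^2 + b * c * t"
  have Q: "Q > 0" using V b c t sig by (simp add: Q_def add_pos_pos)
  define lam where "lam = t / Q"
  have lam: "lam > 0" using t Q by (simp add: lam_def)
  have lbc: "1 - lam * b * c = V * \<sigma>^2 / Q" using Q by (simp add: lam_def Q_def field_simps)
  have lbc0: "1 - lam * b * c > 0" unfolding lbc using V sig Q by simp
  have rv: "\<And>j. (\<lambda>\<omega>. \<xi> \<omega> $ j) \<in> borel_measurable M"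
    using ind unfolding indep_vars_def by auto
  define X where "X = (\<lambda>j \<omega>. exp ((lam * v$j) * \<xi> \<omega> $ j))"
  have lj: "\<bar>lam * v$j\<bar> < 1 / c" for j
  proof -
    have "\<bar>lam * v$j\<bar> * c \<le> lam * b * c"
      using b(1)[of j] lam c by (simp add: abs_mult mult_right_mono mult_left_mono)
    also have "\<dots> < 1" using lbc0 by simp
    finally show ?thesis using c by (simp add: field_simps)
  qed
  have intX: "integrable M (X j)" for j using mgf[where i=j and l="lam * v$j", OF lj[of j]] by (simp add: X_def)
  have indX: "indep_vars (\<lambda>_. borel) X UNIV"
    unfolding X_def
    by (rule indep_vars_compose2[where Y="\<lambda>j x. exp ((lam * v$j) * x)", OF ind]) simp
  define B where "B j = lam^2 * (v$j)^2 * \<sigma>^2 / (2 * (1 - lam * b * c))" for j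
  have EX: "expectation (X j) \<le> exp (B j)" for j
  proof -
    have lnle: "ln (expectation (X j)) \<le> (lam * v$j)^2 * \<sigma>^2 / (2 * (1 - \<bar>lam * v$j\<bar> * c))"
      using mgf[where i=j and l="lam * v$j", OF lj[of j]] by (simp add: X_def)
    also have "\<dots> \<le> B j"
    proof -
      have "\<bar>lam * v$j\<bar> * c \<le> lam * b * c"
        using b(1)[of j] lam c by (simp add: abs_mult mult_right_mono mult_left_mono)
      then have "2 * (1 - lam * b * c) \<le> 2 * (1 - \<bar>lam * v$j\<bar> * c)" by simp
      moreover have "0 < 2 * (1 - lam * b * c)" using lbc0 by simp
      moreover have "0 \<le> (lam * v$j)^2 * \<sigma>^2" by simp
      ultimately have "(lam * v$j)^2 * \<sigma>^2 / (2 * (1 - \<bar>lam * v$j\<bar> * c))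
          \<le> (lam * v$j)^2 * \<sigma>^2 / (2 * (1 - lam * b * c))"
        by (intro divide_left_mono) (auto intro: mult_pos_pos)
      then show ?thesis by (simp add: B_def power_mult_distrib)
    qed
    finally have "ln (expectation (X j)) \<le> B j" .
    show ?thesis
    proof (cases "expectation (X j) > 0")
      case True
      then show ?thesis using \<open>ln (expectation (X j)) \<le> B j\<close>
        by (metis exp_le_cancel_iff exp_ln)
    next
      case False
      then show ?thesis by (smt (verit) exp_gt_zero)
    qed
  qed
  have EX0: "0 \<le> expectation (X j)" for j by (simp add: X_def)
  have inner_eq: "lam * (v \<bullet> \<xi> \<omega>) = (\<Sum>j\<in>UNIV. (lam * v$j) * \<xi> \<omega> $ j)" for \<omega>
    by (simp add: inner_vec_def sum_distrib_left mult.assoc)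
  have prodX: "exp (lam * (v \<bullet> \<xi> \<omega>)) = (\<Prod>j\<in>UNIV. X j \<omega>)" for \<omega>
    by (simp add: inner_eq X_def exp_sum)
  have intP: "integrable M (\<lambda>\<omega>. \<Prod>j\<in>UNIV. X j \<omega>)"
    using indX intX by (intro indep_vars_integrable) auto
  have EP: "expectation (\<lambda>\<omega>. \<Prod>j\<in>UNIV. X j \<omega>) = (\<Prod>j\<in>UNIV. expectation (X j))"
    using indX intX by (intro indep_vars_lebesgue_integral) auto
  also have "\<dots> \<le> (\<Prod>j\<in>UNIV. exp (B j))"
    using EX EX0 by (intro prod_mono) auto
  also have "\<dots> = exp (\<Sum>j\<in>UNIV. B j)" by (simp add: exp_sum)
  also have "\<dots> \<le> exp (lam^2 * V * \<sigma>^2 / (2 * (1 - lam * b * c)))"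
  proof -
    have "(\<Sum>j\<in>UNIV. B j) = lam^2 * \<sigma>^2 / (2 * (1 - lam * b * c)) * (\<Sum>j\<in>UNIV. (v$j)^2)"
      by (simp add: B_def sum_distrib_left sum_divide_distrib mult.commute mult.left_commute)
    also have "\<dots> \<le> lam^2 * \<sigma>^2 / (2 * (1 - lam * b * c)) * V"
      using V(1) lbc0 by (intro mult_left_mono) auto
    finally show ?thesis by (simp add: mult.commute mult.left_commute)
  qed
  finally have Ebound: "expectation (\<lambda>\<omega>. \<Prod>j\<in>UNIV. X j \<omega>) \<le> exp (lam^2 * V * \<sigma>^2 / (2 * (1 - lam * b * c)))" .
  have "{\<omega> \<in> space M. t \<le> v \<bullet> \<xi> \<omega>} = {\<omega> \<in> space M. exp (lam * t) \<le> (\<Prod>j\<in>UNIV. X j \<omega>)}"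
    using lam by (auto simp: prodX[symmetric])
  then have "measure M {\<omega> \<in> space M. t \<le> v \<bullet> \<xi> \<omega>}
     \<le> expectation (\<lambda>\<omega>. \<Prod>j\<in>UNIV. X j \<omega>) / exp (lam * t)"
    using intP by (simp only:) (rule integral_Markov_inequality_measure[where A="space M"],
        auto simp: X_def prod_nonneg)
  also have "\<dots> \<le> exp (lam^2 * V * \<sigma>^2 / (2 * (1 - lam * b * c))) / exp (lam * t)"
    using Ebound by (simp add: divide_right_mono)
  also have "\<dots> = exp (lam^2 * V * \<sigma>^2 / (2 * (1 - lam * b * c)) - lam * t)"
    by (simp add: exp_diff)
  also have "lam^2 * V * \<sigma>^2 / (2 * (1 - lam * b * c)) - lam * t = - (t^2 / (2 * Q))"
    unfolding lbc using Q V sig by (simp add: lam_def field_simps power2_eq_square)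
  finally show ?thesis by (simp add: Q_def)
qed


lemma orth_proj_props:
  fixes S :: "(real^'n) set"
  assumes S: "subspace S"
  shows "orth_proj S x \<in> S \<and> (\<forall>y\<in>S. inner (x - orth_proj S x) y = 0)"
proof -
  obtain y z where yz: "y \<in> span S" "\<And>w. w \<in> span S \<Longrightarrow> orthogonal z w" "x = y + z"
    using orthogonal_subspace_decomp_exists[of S x] by blast
  have spS: "span S = S" using S by (simp add: span_eq_iff)
  have yS: "y \<in> S" using yz(1) spS by simp
  have yo: "\<forall>w\<in>S. inner (x - y) w = 0" using yz(2,3) spS by (auto simp: orthogonal_def)
  have "orth_proj S x = y"
    unfolding orth_proj_def
  proof (rule the_equality)
    show "y \<in> S \<and> (\<forall>w\<in>S. inner (x - y) w = 0)" using yS yo by blast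
  next
    fix q assume q: "q \<in> S \<and> (\<forall>w\<in>S. inner (x - q) w = 0)"
    have d: "y - q \<in> S" using q yS S by (simp add: subspace_diff)
    have "inner (y - q) (y - q) = inner (x - q) (y - q) - inner (x - y) (y - q)"
      by (simp add: inner_diff_left)
    also have "\<dots> = 0" using q yo d by simp
    finally show "q = y" by simp
  qed
  then show ?thesis using yS yo by simp
qed

theorem mainTheorem3:
  fixes M :: "'a measure" and S :: "(real^'n) set" and \<xi> :: "'a \<Rightarrow> real^'n"
    and \<sigma> c :: real and D :: nat
  assumes "prob_space M"
    and "CARD('n) \<ge> 2"
    and "subspace S" and "dim S = D"
    and "prob_space.indep_vars M (\<lambda>_. borel) (\<lambda>i \<omega>. \<xi> \<omega> $ i) UNIV"
    and "\<sigma> > 0" and "c > 0"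
    and "\<And>i l. \<bar>l\<bar> < 1 / c \<Longrightarrow>
           integrable M (\<lambda>\<omega>. exp (l * \<xi> \<omega> $ i)) \<and>
           ln (prob_space.expectation M (\<lambda>\<omega>. exp (l * \<xi> \<omega> $ i)))
             \<le> l^2 * \<sigma>^2 / (2 * (1 - \<bar>l\<bar> * c))"
  shows "(\<forall>x u. x > 0 \<longrightarrow> u > 0 \<longrightarrow>
            measure M {\<omega> \<in> space M.
               (norm (orth_proj S (\<xi> \<omega>)))^2 \<ge> (18::real)^2 * (\<sigma>^2 + 2 * c * u / 18) * (real D + x)
             \<and> linf_norm (orth_proj S (\<xi> \<omega>)) \<le> u} \<le> exp (- x))
       \<and> (\<forall>x. x > 0 \<longrightarrow>
            measure M {\<omega> \<in> space M. linf_norm (orth_proj S (\<xi> \<omega>)) \<ge> x}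
              \<le> 2 * real CARD('n) * exp (- (x^2 / (2 * (Lambda2 S)^2 * (\<sigma>^2 + c * x)))))"
proof -
  note PM = assms(1) and S = assms(3) and dimS = assms(4) and ind = assms(5)
    and sig = assms(6) and c = assms(7) and mgf = assms(8)
  interpret prob_space M by (rule PM)
  let ?P = "orth_proj S"
  have Pin: "?P z \<in> S" for z using orth_proj_props[OF S] by blast
  have Port: "y \<in> S \<Longrightarrow> inner (z - ?P z) y = 0" for z y using orth_proj_props[OF S] by blast
  have innS: "inner y z = inner y (?P z)" if "y \<in> S" for y z
  proof -
    have "inner y z - inner y (?P z) = inner (z - ?P z) y" by (simp add: inner_diff_right inner_commute)
    then show ?thesis using Port[OF that] by simp
  qed
  have rv[measurable]: "\<And>j. (\<lambda>\<omega>. \<xi> \<omega> $ j) \<in> borel_measurable M"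
    using ind unfolding indep_vars_def by auto
  have ev_meas: "{\<omega> \<in> space M. t \<le> v \<bullet> \<xi> \<omega>} \<in> sets M" for t v
  proof -
    have "(\<lambda>\<omega>. v \<bullet> \<xi> \<omega>) = (\<lambda>\<omega>. \<Sum>j\<in>UNIV. v $ j * \<xi> \<omega> $ j)" by (simp add: inner_vec_def)
    moreover have "(\<lambda>\<omega>. \<Sum>j\<in>UNIV. v $ j * \<xi> \<omega> $ j) \<in> borel_measurable M" by measurable
    ultimately have "(\<lambda>\<omega>. v \<bullet> \<xi> \<omega>) \<in> borel_measurable M" by simp
    then show ?thesis by measurable
  qed
  have bern: "measure M {\<omega> \<in> space M. t \<le> v \<bullet> \<xi> \<omega>} \<le> exp (- (t^2 / (2 * (V * \<sigma>^2 + b * c * t))))"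
    if "(\<Sum>j\<in>UNIV. (v$j)^2) \<le> V" "V > 0" "\<And>j. \<bar>v$j\<bar> \<le> b" "b > 0" "t > 0" for v V b t
    by (rule bernstein_vec[OF PM ind c sig mgf that])
  have sumsq: "(\<Sum>j\<in>UNIV. (v$j)^2) = (norm v)^2" for v :: "real^'n"
  proof -
    have "(\<Sum>j\<in>UNIV. (v$j)^2) = v \<bullet> v" by (simp add: inner_vec_def power2_eq_square)
    then show ?thesis by (simp add: dot_square_norm)
  qed
  have part1: "measure M {\<omega> \<in> space M.
               (norm (?P (\<xi> \<omega>)))^2 \<ge> (18::real)^2 * (\<sigma>^2 + 2 * c * u / 18) * (real D + x)
             \<and> linf_norm (?P (\<xi> \<omega>)) \<le> u} \<le> exp (- x)" if x: "x > 0" and u: "u > 0" for x u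
  proof -
    define K where "K = (\<sigma>^2 + 2 * c * u / 18) * (real D + x)"
    have K: "K > 0" using sig c u x by (simp add: K_def add_pos_nonneg)
    define R0 where "R0 = 18 * sqrt K"
    have R0: "R0 > 0" using K by (simp add: R0_def)
    have R0sq: "R0^2 = 18^2 * K" using K by (simp add: R0_def power_mult_distrib)
    define a0 where "a0 = u / R0"
    have a0: "a0 > 0" using u R0 by (simp add: a0_def)
    define T where "T = {v \<in> S. norm v \<le> 1 \<and> (\<forall>j. \<bar>v$j\<bar> \<le> a0)}"
    have TS: "T \<subseteq> S" "\<And>y. y \<in> T \<Longrightarrow> norm y \<le> 1" unfolding T_def by auto
    obtain N where N: "finite N" "N \<subseteq> T" "real (card N) \<le> 5 ^ dim S"
      "\<And>v. v \<in> T \<Longrightarrow> \<exists>v'\<in>N. dist v v' < 1/2"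
      using net_exists[OF S TS] by blast
    let ?E = "{\<omega> \<in> space M.
               (norm (?P (\<xi> \<omega>)))^2 \<ge> (18::real)^2 * (\<sigma>^2 + 2 * c * u / 18) * (real D + x)
             \<and> linf_norm (?P (\<xi> \<omega>)) \<le> u}"
    let ?A = "\<lambda>v'. {\<omega> \<in> space M. R0/2 \<le> v' \<bullet> \<xi> \<omega>}"
    have sub: "?E \<subseteq> (\<Union>v'\<in>N. ?A v')"
    proof
      fix \<omega> assume om: "\<omega> \<in> ?E"
      define w where "w = ?P (\<xi> \<omega>)"
      define R where "R = norm w"
      have h: "(18::real)^2 * (\<sigma>^2 + 2 * c * u / 18) * (real D + x) \<le> R^2"
        using om by (simp only: R_def w_def mem_Collect_eq)
      have "R0^2 = (18::real)^2 * (\<sigma>^2 + 2 * c * u / 18) * (real D + x)"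
        by (simp only: R0sq K_def mult.assoc)
      then have "R^2 \<ge> R0^2" using h by simp
      moreover have "R \<ge> 0" by (simp add: R_def)
      ultimately have RR0: "R \<ge> R0" using R0 by (meson less_le power2_le_imp_le)
      then have Rpos: "R > 0" using R0 by simp
      have wj: "\<bar>w$j\<bar> \<le> u" for j
      proof -
        have "\<bar>w$j\<bar> \<le> linf_norm w" unfolding linf_norm_def by (rule Max_ge) auto
        then show ?thesis using om by (simp add: w_def)
      qed
      define v where "v = (1/R) *\<^sub>R w"
      have vS: "v \<in> S" using Pin S by (simp add: v_def w_def subspace_scale)
      have nv: "norm v = 1" using Rpos by (simp add: v_def R_def)
      have vj: "\<bar>v$j\<bar> \<le> a0" for j
      proof -
        have "\<bar>v$j\<bar> = \<bar>w$j\<bar> / R" using Rpos by (simp add: v_def)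
        also have "\<dots> \<le> u / R" using wj[of j] Rpos by (simp add: divide_right_mono)
        also have "\<dots> \<le> u / R0" using RR0 R0 u by (simp add: divide_left_mono)
        finally show ?thesis by (simp add: a0_def)
      qed
      have "v \<in> T" using vS nv vj by (simp add: T_def)
      then obtain v' where v': "v' \<in> N" "dist v v' < 1/2" using N(4) by blast
      have v'S: "v' \<in> S" using v' N(2) by (auto simp: T_def)
      have vw: "v \<bullet> w = R" using Rpos by (simp add: v_def R_def dot_square_norm power2_eq_square)
      have "(v - v') \<bullet> w \<le> norm (v - v') * norm w" by (rule norm_cauchy_schwarz)
      also have "\<dots> \<le> (1/2) * R" using v' Rpos by (simp add: R_def dist_norm mult_right_mono)
      finally have "R - v' \<bullet> w \<le> R / 2" using vw by (simp add: inner_diff_left)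
      then have "R0 / 2 \<le> v' \<bullet> w" using RR0 by simp
      also have "v' \<bullet> w = v' \<bullet> \<xi> \<omega>" using innS[OF v'S] by (simp add: w_def)
      finally show "\<omega> \<in> (\<Union>v'\<in>N. ?A v')" using v' om by auto
    qed
    have each: "measure M (?A v') \<le> exp (- (9 * (real D + x)))" if "v' \<in> N" for v'
    proof -
      have v'T: "v' \<in> T" using that N(2) by auto
      have "measure M (?A v') \<le> exp (- ((R0/2)^2 / (2 * (1 * \<sigma>^2 + a0 * c * (R0/2)))))"
        using v'T by (intro bern) (auto simp: T_def sumsq R0 a0 power_le_one)
      also have "\<dots> \<le> exp (- (9 * (real D + x)))"
      proof -
        have ac: "1 * \<sigma>^2 + a0 * c * (R0/2) = \<sigma>^2 + c * u / 2" using R0 by (simp add: a0_def field_simps)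
        have q: "(R0/2)^2 = 81 * K" using R0sq by (simp add: power_divide)
        have den: "0 < 2 * (\<sigma>^2 + c * u / 2)" using sig c u by (simp add: add_pos_pos)
        have "9 * (real D + x) * (2 * (\<sigma>^2 + c * u / 2)) \<le> 81 * K"
        proof -
          have "81 * K - 9 * (real D + x) * (2 * (\<sigma>^2 + c * u / 2)) = 63 * \<sigma>^2 * (real D + x)"
            by (simp add: K_def field_simps)
          moreover have "0 \<le> 63 * \<sigma>^2 * (real D + x)" using x by simp
          ultimately show ?thesis by linarith
        qed
        then have "9 * (real D + x) \<le> 81 * K / (2 * (\<sigma>^2 + c * u / 2))"
          using den by (simp add: le_divide_eq)
        moreover have "(R0/2)^2 / (2 * (1 * \<sigma>^2 + a0 * c * (R0/2))) = 81 * K / (2 * (\<sigma>^2 + c * u / 2))"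
          by (simp only: ac q)
        ultimately show ?thesis by simp
      qed
      finally show ?thesis .
    qed
    have "measure M ?E \<le> measure M (\<Union>v'\<in>N. ?A v')"
      by (rule finite_measure_mono[OF sub], rule sets.finite_UN[OF N(1)], rule ev_meas)
    also have "\<dots> \<le> (\<Sum>v'\<in>N. measure M (?A v'))"
      by (intro finite_measure_subadditive_finite N(1) image_subsetI ev_meas)
    also have "\<dots> \<le> (\<Sum>v'\<in>N. exp (- (9 * (real D + x))))"
      using each by (intro sum_mono) auto
    also have "\<dots> = real (card N) * exp (- (9 * (real D + x)))" by simp
    also have "\<dots> \<le> 5 ^ D * exp (- (9 * (real D + x)))"
      using N(3) dimS by (intro mult_right_mono) auto
    also have "\<dots> \<le> exp (- x)"
    proof -
      have "ln (5::real) \<le> 9" using ln_le_minus_one[of 5] by simp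
      have "(5::real) ^ D = exp (real D * ln 5)" by (simp add: exp_of_nat_mult)
      also have "\<dots> \<le> exp (real D * 9)" using \<open>ln 5 \<le> 9\<close> by (intro exp_mono mult_left_mono) auto
      finally have "5 ^ D * exp (- (9 * (real D + x))) \<le> exp (real D * 9) * exp (- (9 * (real D + x)))"
        by (intro mult_right_mono) auto
      also have "\<dots> = exp (- (9 * x))" by (simp add: exp_add[symmetric] algebra_simps)
      also have "\<dots> \<le> exp (- x)" using x by simp
      finally show ?thesis .
    qed
    finally show ?thesis .
  qed
  have part2: "measure M {\<omega> \<in> space M. linf_norm (?P (\<xi> \<omega>)) \<ge> x}
              \<le> 2 * real CARD('n) * exp (- (x^2 / (2 * (Lambda2 S)^2 * (\<sigma>^2 + c * x))))"
    if x: "x > 0" for x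
  proof -
    define L where "L = Lambda2 S"
    define e where "e i = ?P (axis i (1::real))" for i :: 'n
    have eL: "norm (e i) \<le> L" for i
      unfolding L_def Lambda2_def e_def by (rule Max_ge) auto
    have L0: "L \<ge> 0" using eL[of undefined] norm_ge_zero order.trans by blast
    show ?thesis
    proof (cases "L = 0")
      case True
      have "measure M {\<omega> \<in> space M. linf_norm (?P (\<xi> \<omega>)) \<ge> x} \<le> 1" by (rule prob_le_1)
      also have "\<dots> \<le> 2 * real CARD('n) * exp (- (x^2 / (2 * (Lambda2 S)^2 * (\<sigma>^2 + c * x))))"
        using True assms(2) by (simp add: L_def)
      finally show ?thesis .
    next
      case False
      then have Lp: "L > 0" using L0 by simp
      have eS: "e i \<in> S" for i by (simp add: e_def Pin)
      have ej: "\<bar>e i $ j\<bar> \<le> L^2" for i j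
      proof -
        have "e i $ j = e i \<bullet> axis j 1" by (simp add: cart_eq_inner_axis)
        also have "\<dots> = e i \<bullet> e j" using innS[OF eS[of i]] by (simp add: e_def)
        finally have "\<bar>e i $ j\<bar> = \<bar>e i \<bullet> e j\<bar>" by simp
        also have "\<dots> \<le> norm (e i) * norm (e j)" by (rule Cauchy_Schwarz_ineq2)
        also have "\<dots> \<le> L * L" using eL L0 by (intro mult_mono) auto
        finally show ?thesis by (simp add: power2_eq_square)
      qed
      have esq: "(\<Sum>j\<in>UNIV. (e i $ j)^2) \<le> L^2" for i
        using eL[of i] by (simp add: sumsq power_mono)
      have coord: "?P z $ i = e i \<bullet> z" for z i
      proof -
        have "?P z $ i = axis i 1 \<bullet> ?P z" by (simp add: cart_eq_inner_axis inner_commute)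
        also have "\<dots> = ?P (axis i 1) \<bullet> ?P z"
          using innS[OF Pin[of z], of "axis i 1"] by (simp add: inner_commute)
        also have "\<dots> = e i \<bullet> z" using innS[OF eS[of i], of z] by (simp add: e_def)
        finally show ?thesis .
      qed
      let ?B = "\<lambda>i. {\<omega> \<in> space M. x \<le> e i \<bullet> \<xi> \<omega>} \<union> {\<omega> \<in> space M. x \<le> (- e i) \<bullet> \<xi> \<omega>}"
      define bnd where "bnd = exp (- (x^2 / (2 * (L^2 * \<sigma>^2 + L^2 * c * x))))"
      have sub: "{\<omega> \<in> space M. linf_norm (?P (\<xi> \<omega>)) \<ge> x} \<subseteq> (\<Union>i. ?B i)"
      proof
        fix \<omega> assume om: "\<omega> \<in> {\<omega> \<in> space M. linf_norm (?P (\<xi> \<omega>)) \<ge> x}"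
        have "linf_norm (?P (\<xi> \<omega>)) \<in> range (\<lambda>i. \<bar>?P (\<xi> \<omega>) $ i\<bar>)"
          unfolding linf_norm_def by (rule Max_in) auto
        then obtain i where "linf_norm (?P (\<xi> \<omega>)) = \<bar>?P (\<xi> \<omega>) $ i\<bar>" by auto
        then have "x \<le> \<bar>e i \<bullet> \<xi> \<omega>\<bar>" using om coord by simp
        then show "\<omega> \<in> (\<Union>i. ?B i)" using om by (auto simp: abs_if split: if_splits)
      qed
      have Bi: "measure M (?B i) \<le> 2 * bnd" for i
      proof -
        have "measure M (?B i) \<le> measure M {\<omega> \<in> space M. x \<le> e i \<bullet> \<xi> \<omega>} + measure M {\<omega> \<in> space M. x \<le> (- e i) \<bullet> \<xi> \<omega>}"
          by (intro measure_Un_le ev_meas)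
        also have "\<dots> \<le> bnd + bnd"
          unfolding bnd_def
          by (intro add_mono bern) (use esq ej Lp x in auto)
        finally show ?thesis by simp
      qed
      have "measure M {\<omega> \<in> space M. linf_norm (?P (\<xi> \<omega>)) \<ge> x} \<le> measure M (\<Union>i. ?B i)"
        by (rule finite_measure_mono[OF sub], intro sets.finite_UN sets.Un ev_meas, simp)
      also have "\<dots> \<le> (\<Sum>i\<in>UNIV. measure M (?B i))"
        by (intro finite_measure_subadditive_finite image_subsetI sets.Un ev_meas, simp)
      also have "\<dots> \<le> (\<Sum>i\<in>(UNIV::'n set). 2 * bnd)" using Bi by (intro sum_mono) auto
      also have "\<dots> = 2 * real CARD('n) * bnd" by simp
      also have "bnd = exp (- (x^2 / (2 * (Lambda2 S)^2 * (\<sigma>^2 + c * x))))"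
        by (simp add: bnd_def L_def algebra_simps)
      finally show ?thesis .
    qed
  qed
  show ?thesis using part1 part2 by blast
qed

end
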